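(* Let $X_1=U_1\Sigma_1V_1^T$, $X_2=U_2\Sigma_2V_2^T$ and $(X_1~X_2)=U\Sigma V^T$ be (compact) SVDs, where $X_1,X_2$ have the same number of rows. Assume the nonzero singular values of $X_1$, of $X_2$, and of $(X_1~X_2)$ are each distinct. Suppose $U_1$ and $U_2$ may share some identical columns, and that every column of $U_1$ not appearing in $U_2$ is orthogonal to every column of $U_2$ not appearing in $U_1$. Then every column of $U_1$ and every column of $U_2$ is (up to sign) a column of $U$. *)

theory Defs
  imports "Jordan_Normal_Form.Matrix"
begin

definition hcat :: "'a mat \<Rightarrow> 'a mat \<Rightarrow> 'a mat" where
  "hcat A B = mat (dim_row A) (dim_col A + dim_col B)
     (\<lambda>(i, j). if j < dim_col A then A $$ (i, j) else B $$ (i, j - dim_col A))"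

definition compact_svd :: "real mat \<Rightarrow> real mat \<Rightarrow> real mat \<Rightarrow> real mat \<Rightarrow> bool" where
  "compact_svd X U S V \<longleftrightarrow>
     (let m = dim_row X; n = dim_col X; r = dim_col U in
       U \<in> carrier_mat m r \<and> S \<in> carrier_mat r r \<and> V \<in> carrier_mat n r \<and>
       transpose_mat U * U = 1\<^sub>m r \<and> transpose_mat V * V = 1\<^sub>m r \<and>
       diagonal_mat S \<and> (\<forall>i<r. S $$ (i, i) > 0) \<and>
       X = U * S * transpose_mat V)"

definition distinct_sv :: "real mat \<Rightarrow> bool" where
  "distinct_sv S \<longleftrightarrow> (\<forall>i<dim_row S. \<forall>j<dim_row S. i \<noteq> j \<longrightarrow> S $$ (i, i) \<noteq> S $$ (j, j))"

end

theory Submission imports Defs begin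

lemma col_carr: "U \<in> carrier_mat m r \<Longrightarrow> col U j \<in> carrier_vec m"
  by (metis carrier_matD(1) carrier_vecI dim_col)

lemma mult_zero_vec_r:
  fixes A :: "real mat"
  assumes "A \<in> carrier_mat nr nc"
  shows "A *\<^sub>v 0\<^sub>v nc = 0\<^sub>v nr"
  using assms by (intro eq_vecI) auto

lemma diag_mv:
  fixes S :: "real mat"
  assumes S: "S \<in> carrier_mat r r" and dg: "diagonal_mat S" and y: "y \<in> carrier_vec r" and k: "k < r"
  shows "(S *\<^sub>v y) $ k = S $$ (k,k) * y $ k"
proof -
  have "(S *\<^sub>v y) $ k = (\<Sum>l\<in>{0..<r}. S $$ (k,l) * y $ l)"
    using S y k by (auto simp: scalar_prod_def)
  also have "\<dots> = S $$ (k,k) * y $ k + (\<Sum>l\<in>{0..<r}-{k}. S $$ (k,l) * y $ l)"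
    using k by (subst sum.remove[of _ k]) auto
  also have "(\<Sum>l\<in>{0..<r}-{k}. S $$ (k,l) * y $ l) = 0"
    using dg S k unfolding diagonal_mat_def by (intro sum.neutral) auto
  finally show ?thesis by simp
qed

lemma diag_transpose:
  fixes S :: "real mat"
  assumes S: "S \<in> carrier_mat r r" and dg: "diagonal_mat S"
  shows "transpose_mat S = S"
proof (rule eq_matI)
  fix i j assume "i < dim_row S" "j < dim_col S"
  then show "transpose_mat S $$ (i, j) = S $$ (i, j)"
    using S dg unfolding diagonal_mat_def by (cases "i = j") auto
qed (use S in auto)

lemma svd_MV:
  assumes svd: "compact_svd X U S V" and u: "u \<in> carrier_vec (dim_row X)"
  shows "(X * transpose_mat X) *\<^sub>v u = U *\<^sub>v (S *\<^sub>v (S *\<^sub>v (transpose_mat U *\<^sub>v u)))"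
proof -
  define m n r where "m = dim_row X" "n = dim_col X" "r = dim_col U"
  have U: "U \<in> carrier_mat m r" and S: "S \<in> carrier_mat r r" and V: "V \<in> carrier_mat n r"
    and VV: "transpose_mat V * V = 1\<^sub>m r" and dg: "diagonal_mat S"
    and X: "X = U * S * transpose_mat V"
    using svd unfolding compact_svd_def m_n_r_def Let_def by auto
  have Xc: "X \<in> carrier_mat m n" using m_n_r_def by auto
  have XT: "transpose_mat X = V * S * transpose_mat U"
  proof -
    have "transpose_mat (U * S * transpose_mat V) = transpose_mat (transpose_mat V) * transpose_mat (U * S)"
      using U S V by (intro transpose_mult[of _ m r _ n]) auto
    also have "transpose_mat (U * S) = transpose_mat S * transpose_mat U"
      using U S by (intro transpose_mult[of _ m r _ r]) auto
    also have "transpose_mat S = S" using diag_transpose[OF S dg] .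
    also have "transpose_mat (transpose_mat V) * (S * transpose_mat U) = V * S * transpose_mat U"
      using U S V by (simp add: assoc_mult_mat[of V n r S r])
    finally show ?thesis unfolding X .
  qed
  have um: "u \<in> carrier_vec m" using u m_n_r_def by auto
  have "(X * transpose_mat X) *\<^sub>v u = X *\<^sub>v (transpose_mat X *\<^sub>v u)"
    using Xc um by (intro assoc_mult_mat_vec) auto
  also have "transpose_mat X *\<^sub>v u = V *\<^sub>v (S *\<^sub>v (transpose_mat U *\<^sub>v u))"
  proof -
    have "V * S * transpose_mat U *\<^sub>v u = (V * S) *\<^sub>v (transpose_mat U *\<^sub>v u)"
      using U S V um by (intro assoc_mult_mat_vec[of _ n r _ m]) auto
    also have "\<dots> = V *\<^sub>v (S *\<^sub>v (transpose_mat U *\<^sub>v u))"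
      using U S V um by (intro assoc_mult_mat_vec[of _ n r _ r]) auto
    finally show ?thesis unfolding XT .
  qed
  also have "X *\<^sub>v (V *\<^sub>v (S *\<^sub>v (transpose_mat U *\<^sub>v u))) = U *\<^sub>v (S *\<^sub>v ((transpose_mat V * V) *\<^sub>v (S *\<^sub>v (transpose_mat U *\<^sub>v u))))"
  proof -
    let ?w = "V *\<^sub>v (S *\<^sub>v (transpose_mat U *\<^sub>v u))"
    have w: "?w \<in> carrier_vec n" using U S V um by auto
    have "U * S * transpose_mat V *\<^sub>v ?w = (U * S) *\<^sub>v (transpose_mat V *\<^sub>v ?w)"
      using U S V w by (intro assoc_mult_mat_vec[of _ m r _ n]) auto
    also have "\<dots> = U *\<^sub>v (S *\<^sub>v (transpose_mat V *\<^sub>v ?w))"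
      using U S V w by (intro assoc_mult_mat_vec[of _ m r _ r]) auto
    also have "transpose_mat V *\<^sub>v ?w = (transpose_mat V * V) *\<^sub>v (S *\<^sub>v (transpose_mat U *\<^sub>v u))"
      using U S V um by (intro assoc_mult_mat_vec[of _ r n _ r, symmetric]) auto
    finally show ?thesis unfolding X .
  qed
  also have "\<dots> = U *\<^sub>v (S *\<^sub>v (S *\<^sub>v (transpose_mat U *\<^sub>v u)))"
    unfolding VV using U S um by simp
  finally show ?thesis .
qed

lemma mult_unit_col:
  fixes U :: "real mat"
  assumes U: "U \<in> carrier_mat m r" and k: "k < r"
  shows "U *\<^sub>v unit_vec r k = col U k"
  using U k by (intro eq_vecI) auto

lemma col_self:
  fixes U :: "real mat"
  assumes U: "U \<in> carrier_mat m r" and UU: "transpose_mat U * U = 1\<^sub>m r" and k: "k < r" and l: "l < r"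
  shows "col U k \<bullet> col U l = (if k = l then 1 else 0)"
proof -
  have "(transpose_mat U * U) $$ (k,l) = col U k \<bullet> col U l" using U k l by auto
  then show ?thesis unfolding UU using k l by auto
qed

lemma svd_eigvec:
  assumes svd: "compact_svd X U S V" and d: "distinct_sv S"
    and u: "u \<in> carrier_vec (dim_row X)" and uu: "u \<bullet> u = 1"
    and eig: "(X * transpose_mat X) *\<^sub>v u = lam \<cdot>\<^sub>v u" and lam: "lam > 0"
  shows "\<exists>k<dim_col U. u = col U k \<or> u = - col U k"
proof -
  define m r where "m = dim_row X" "r = dim_col U"
  have U: "U \<in> carrier_mat m r" and S: "S \<in> carrier_mat r r"
    and UU: "transpose_mat U * U = 1\<^sub>m r" and dg: "diagonal_mat S"
    and pos: "\<forall>i<r. S $$ (i, i) > 0"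
    using svd unfolding compact_svd_def m_r_def Let_def by auto
  have um: "u \<in> carrier_vec m" using u m_r_def by auto
  define w where "w = transpose_mat U *\<^sub>v u"
  have w: "w \<in> carrier_vec r" using U um w_def by auto
  define z where "z = S *\<^sub>v (S *\<^sub>v w)"
  have z: "z \<in> carrier_vec r" using S w z_def by auto
  have Mz: "lam \<cdot>\<^sub>v u = U *\<^sub>v z"
    using svd_MV[OF svd u] eig unfolding z_def w_def by simp
  have ucol: "u = U *\<^sub>v ((1/lam) \<cdot>\<^sub>v z)"
  proof -
    have "U *\<^sub>v ((1/lam) \<cdot>\<^sub>v z) = (1/lam) \<cdot>\<^sub>v (U *\<^sub>v z)"
      using U z by (rule mult_mat_vec)
    also have "\<dots> = (1/lam) \<cdot>\<^sub>v (lam \<cdot>\<^sub>v u)" unfolding Mz ..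
    also have "\<dots> = u" using lam by (intro eq_vecI) auto
    finally show ?thesis by simp
  qed
  have wz: "w = (1/lam) \<cdot>\<^sub>v z"
  proof -
    have "w = (transpose_mat U * U) *\<^sub>v ((1/lam) \<cdot>\<^sub>v z)"
      unfolding w_def using U z by (subst ucol) (rule assoc_mult_mat_vec[symmetric], auto)
    then show ?thesis unfolding UU using z by simp
  qed
  have Uw: "U *\<^sub>v w = u" using ucol wz by simp
  have went: "w $ k = (1/lam) * (S $$ (k,k) * (S $$ (k,k) * w $ k))" if k: "k < r" for k
  proof -
    have "w $ k = (1/lam) * z $ k" using wz k z by (metis carrier_vecD index_smult_vec(1))
    also have "z $ k = S $$ (k,k) * (S *\<^sub>v w) $ k"
      unfolding z_def using S dg w k by (intro diag_mv) auto
    also have "(S *\<^sub>v w) $ k = S $$ (k,k) * w $ k" using S dg w k by (intro diag_mv) auto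
    finally show ?thesis .
  qed
  have sq: "(S $$ (k,k))^2 = lam" if k: "k < r" and nz: "w $ k \<noteq> 0" for k
  proof -
    have "lam * w $ k = (S $$ (k,k))^2 * w $ k" using went[OF k] lam by (simp add: field_simps power2_eq_square)
    then show ?thesis using nz by simp
  qed
  have uniq: "k = l" if "k < r" "l < r" "w $ k \<noteq> 0" "w $ l \<noteq> 0" for k l
  proof (rule ccontr)
    assume kl: "k \<noteq> l"
    have "(S $$ (k,k))^2 = (S $$ (l,l))^2" using sq that by simp
    then have "S $$ (k,k) = S $$ (l,l)" using pos that by (simp add: power2_eq_iff_nonneg less_imp_le)
    moreover have "dim_row S = r" using S by auto
    ultimately show False using d kl that unfolding distinct_sv_def by auto
  qed
  obtain k where k: "k < r" and nz: "w $ k \<noteq> 0"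
  proof (rule ccontr)
    assume "\<not> thesis"
    then have "\<forall>k<r. w $ k = 0" using that by blast
    then have "w = 0\<^sub>v r" using w by (intro eq_vecI) auto
    then have "u = 0\<^sub>v m" using Uw U by auto
    then show False using uu by simp
  qed
  define c where "c = w $ k"
  have wc: "w = c \<cdot>\<^sub>v unit_vec r k"
    using w uniq k nz unfolding c_def by (intro eq_vecI) auto
  have uc: "u = c \<cdot>\<^sub>v col U k"
  proof -
    have "u = U *\<^sub>v (c \<cdot>\<^sub>v unit_vec r k)" using Uw wc by simp
    also have "\<dots> = c \<cdot>\<^sub>v (U *\<^sub>v unit_vec r k)" using U by (intro mult_mat_vec) auto
    finally show ?thesis using mult_unit_col[OF U k] by simp
  qed
  have cU: "col U k \<in> carrier_vec m" using U k by auto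
  have "u \<bullet> u = c * c * (col U k \<bullet> col U k)" unfolding uc using cU by simp
  then have "c * c = 1" using uu col_self[OF U UU k k] by simp
  then have "c = 1 \<or> c = -1" by (metis mult_cancel_left2 square_eq_1_iff)
  then show ?thesis
  proof
    assume "c = 1" then show ?thesis using uc k cU unfolding m_r_def by auto
  next
    assume "c = -1"
    then have "u = - col U k" using uc cU by (intro eq_vecI) auto
    then show ?thesis using k unfolding m_r_def by auto
  qed
qed



lemma svd_col_eig:
  assumes svd: "compact_svd X U S V" and i: "i < dim_col U"
  shows "(X * transpose_mat X) *\<^sub>v col U i = (S $$ (i,i))^2 \<cdot>\<^sub>v col U i"
proof -
  define m r where "m = dim_row X" "r = dim_col U"
  have U: "U \<in> carrier_mat m r" and S: "S \<in> carrier_mat r r"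
    and UU: "transpose_mat U * U = 1\<^sub>m r" and dg: "diagonal_mat S"
    using svd unfolding compact_svd_def m_r_def Let_def by auto
  have ir: "i < r" using i m_r_def by auto
  have cu: "col U i \<in> carrier_vec (dim_row X)" using col_carr[OF U] unfolding m_r_def .
  have e: "transpose_mat U *\<^sub>v col U i = unit_vec r i"
  proof -
    have "col (transpose_mat U * U) i = transpose_mat U *\<^sub>v col U i"
      using U ir by (intro col_mult2[of _ r m]) auto
    then show ?thesis unfolding UU using ir by simp
  qed
  have ss: "S *\<^sub>v (S *\<^sub>v unit_vec r i) = (S $$ (i,i))^2 \<cdot>\<^sub>v unit_vec r i"
  proof (rule eq_vecI)
    fix k assume "k < dim_vec ((S $$ (i,i))^2 \<cdot>\<^sub>v unit_vec r i)"
    then have k: "k < r" by simp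
    have "(S *\<^sub>v (S *\<^sub>v unit_vec r i)) $ k = S $$ (k,k) * (S *\<^sub>v unit_vec r i) $ k"
      using S dg k by (intro diag_mv) auto
    also have "(S *\<^sub>v unit_vec r i) $ k = S $$ (k,k) * unit_vec r i $ k"
      using S dg k by (intro diag_mv) auto
    finally show "(S *\<^sub>v (S *\<^sub>v unit_vec r i)) $ k = ((S $$ (i,i))^2 \<cdot>\<^sub>v unit_vec r i) $ k"
      using k ir by (auto simp: power2_eq_square)
  qed (use S in auto)
  have "(X * transpose_mat X) *\<^sub>v col U i = U *\<^sub>v ((S $$ (i,i))^2 \<cdot>\<^sub>v unit_vec r i)"
    using svd_MV[OF svd cu] e ss by simp
  also have "\<dots> = (S $$ (i,i))^2 \<cdot>\<^sub>v (U *\<^sub>v unit_vec r i)" using U by (intro mult_mat_vec) auto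
  finally show ?thesis using mult_unit_col[OF U ir] by simp
qed

lemma svd_orth_zero:
  assumes svd: "compact_svd X U S V" and u: "u \<in> carrier_vec (dim_row X)"
    and o: "\<forall>j<dim_col U. col U j \<bullet> u = 0"
  shows "(X * transpose_mat X) *\<^sub>v u = 0\<^sub>v (dim_row X)"
proof -
  define m r where "m = dim_row X" "r = dim_col U"
  have U: "U \<in> carrier_mat m r" and S: "S \<in> carrier_mat r r"
    using svd unfolding compact_svd_def m_r_def Let_def by auto
  have dU: "dim_row U = m" "dim_col U = r" using U by auto
  have "transpose_mat U *\<^sub>v u = 0\<^sub>v r"
  proof (rule eq_vecI)
    fix j assume "j < dim_vec (0\<^sub>v r :: real vec)"
    then have j: "j < r" by simp
    have "(transpose_mat U *\<^sub>v u) $ j = row (transpose_mat U) j \<bullet> u"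
      using j dU by (intro index_mult_mat_vec) simp
    also have "row (transpose_mat U) j = col U j" using j dU by simp
    also have "col U j \<bullet> u = 0" using o j dU by simp
    finally show "(transpose_mat U *\<^sub>v u) $ j = (0\<^sub>v r :: real vec) $ j" using j by simp
  next
    show "dim_vec (transpose_mat U *\<^sub>v u) = dim_vec (0\<^sub>v r :: real vec)" using dU by simp
  qed
  then have "S *\<^sub>v (S *\<^sub>v (transpose_mat U *\<^sub>v u)) = 0\<^sub>v r" using mult_zero_vec_r[OF S] by simp
  then have "U *\<^sub>v (S *\<^sub>v (S *\<^sub>v (transpose_mat U *\<^sub>v u))) = 0\<^sub>v m" using mult_zero_vec_r[OF U] by simp
  then show ?thesis using svd_MV[OF svd u] unfolding m_r_def by simp
qed

lemma hcat_MM: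
  fixes X1 X2 :: "real mat"
  assumes rows: "dim_row X1 = dim_row X2"
  shows "hcat X1 X2 * transpose_mat (hcat X1 X2) = X1 * transpose_mat X1 + X2 * transpose_mat X2"
proof -
  have dr: "dim_row (hcat X1 X2) = dim_row X1" unfolding hcat_def by simp
  show ?thesis
proof (rule eq_matI)
  fix i j assume "i < dim_row (X1 * transpose_mat X1 + X2 * transpose_mat X2)"
    "j < dim_col (X1 * transpose_mat X1 + X2 * transpose_mat X2)"
  then have i: "i < dim_row X1" and j: "j < dim_row X1" using rows by auto
  define n1 n2 where "n1 = dim_col X1" "n2 = dim_col X2"
  let ?H = "hcat X1 X2"
  let ?g = "\<lambda>l. ?H $$ (i,l) * ?H $$ (j,l)"
  have dH: "dim_row ?H = dim_row X1" "dim_col ?H = n1 + n2" unfolding hcat_def n1_n2_def by auto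
  have "(?H * transpose_mat ?H) $$ (i,j) = (\<Sum>l\<in>{0..<n1+n2}. ?g l)"
    using i j dH by (simp add: scalar_prod_def)
  also have "\<dots> = (\<Sum>l\<in>{0..<n1}. ?g l) + (\<Sum>l\<in>{n1..<n1+n2}. ?g l)"
    by (rule sum.atLeastLessThan_concat[symmetric]) auto
  also have "(\<Sum>l\<in>{n1..<n1+n2}. ?g l) = (\<Sum>l\<in>{0..<n2}. ?g (l + n1))"
    using sum.shift_bounds_nat_ivl[of ?g 0 n1 n2] by (simp add: add.commute)
  also have "(\<Sum>l\<in>{0..<n1}. ?g l) = (\<Sum>l\<in>{0..<n1}. X1 $$ (i,l) * X1 $$ (j,l))"
    using i j rows unfolding hcat_def n1_n2_def by (intro sum.cong) auto
  also have "(\<Sum>l\<in>{0..<n2}. ?g (l + n1)) = (\<Sum>l\<in>{0..<n2}. X2 $$ (i,l) * X2 $$ (j,l))"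
    using i j rows unfolding hcat_def n1_n2_def by (intro sum.cong) auto
  also have "(\<Sum>l\<in>{0..<n1}. X1 $$ (i,l) * X1 $$ (j,l)) + (\<Sum>l\<in>{0..<n2}. X2 $$ (i,l) * X2 $$ (j,l))
     = (X1 * transpose_mat X1 + X2 * transpose_mat X2) $$ (i,j)"
  proof -
    have a: "(X1 * transpose_mat X1) $$ (i,j) = (\<Sum>l\<in>{0..<n1}. X1 $$ (i,l) * X1 $$ (j,l))"
      using i j unfolding n1_n2_def by (simp add: scalar_prod_def)
    have b: "(X2 * transpose_mat X2) $$ (i,j) = (\<Sum>l\<in>{0..<n2}. X2 $$ (i,l) * X2 $$ (j,l))"
      using i j rows unfolding n1_n2_def by (simp add: scalar_prod_def)
    have c: "(X1 * transpose_mat X1 + X2 * transpose_mat X2) $$ (i,j) = (X1 * transpose_mat X1) $$ (i,j) + (X2 * transpose_mat X2) $$ (i,j)"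
      using i j rows by (intro index_add_mat(1)) auto
    show ?thesis unfolding c a b ..
  qed
  finally show "(?H * transpose_mat ?H) $$ (i,j) = (X1 * transpose_mat X1 + X2 * transpose_mat X2) $$ (i,j)" .
next
  show "dim_row (hcat X1 X2 * transpose_mat (hcat X1 X2)) = dim_row (X1 * transpose_mat X1 + X2 * transpose_mat X2)"
    using dr rows by simp
next
  show "dim_col (hcat X1 X2 * transpose_mat (hcat X1 X2)) = dim_col (X1 * transpose_mat X1 + X2 * transpose_mat X2)"
    using dr rows by simp
qed
qed

lemma in_cols_iff: "x \<in> set (cols A) \<longleftrightarrow> (\<exists>j<dim_col A. x = col A j)"
  by (auto simp: in_set_conv_nth)

lemma two_col:
  fixes XA XB UA SA VA UB SB VB :: "real mat"
  assumes rows: "dim_row XA = dim_row XB"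
    and svdA: "compact_svd XA UA SA VA" and svdB: "compact_svd XB UB SB VB"
    and orth: "\<forall>i<dim_col UA. \<forall>j<dim_col UB.
       col UA i \<notin> set (cols UB) \<longrightarrow> col UB j \<notin> set (cols UA) \<longrightarrow>
       col UA i \<bullet> col UB j = 0"
    and i: "i < dim_col UA"
  shows "\<exists>lam>0. (XA * transpose_mat XA + XB * transpose_mat XB) *\<^sub>v col UA i = lam \<cdot>\<^sub>v col UA i"
proof -
  define m where "m = dim_row XA"
  have UA: "UA \<in> carrier_mat m (dim_col UA)" and UAA: "transpose_mat UA * UA = 1\<^sub>m (dim_col UA)"
    and posA: "\<forall>i<dim_col UA. SA $$ (i, i) > 0"
    using svdA unfolding compact_svd_def m_def Let_def by auto
  have UB: "UB \<in> carrier_mat m (dim_col UB)" and UBB: "transpose_mat UB * UB = 1\<^sub>m (dim_col UB)"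
    and posB: "\<forall>i<dim_col UB. SB $$ (i, i) > 0"
    using svdB rows unfolding compact_svd_def m_def Let_def by auto
  let ?u = "col UA i"
  have u: "?u \<in> carrier_vec m" by (rule col_carr[OF UA])
  have MA: "XA * transpose_mat XA \<in> carrier_mat m m" using m_def by auto
  have MB: "XB * transpose_mat XB \<in> carrier_mat m m" using m_def rows by auto
  have split: "(XA * transpose_mat XA + XB * transpose_mat XB) *\<^sub>v ?u
     = (XA * transpose_mat XA) *\<^sub>v ?u + (XB * transpose_mat XB) *\<^sub>v ?u"
    using MA MB u by (rule add_mult_distrib_mat_vec)
  have eA: "(XA * transpose_mat XA) *\<^sub>v ?u = (SA $$ (i,i))^2 \<cdot>\<^sub>v ?u"
    using svd_col_eig[OF svdA i] .
  have sA0: "SA $$ (i,i) > 0" using posA i by blast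
  have sA: "(SA $$ (i,i))^2 > 0" using sA0 by simp
  show ?thesis
  proof (cases "?u \<in> set (cols UB)")
    case True
    then obtain j where j: "j < dim_col UB" and uj: "?u = col UB j" using in_cols_iff by blast
    have eB: "(XB * transpose_mat XB) *\<^sub>v ?u = (SB $$ (j,j))^2 \<cdot>\<^sub>v ?u"
      using svd_col_eig[OF svdB j] uj by simp
    have sB0: "SB $$ (j,j) > 0" using posB j by blast
    have sB: "(SB $$ (j,j))^2 > 0" using sB0 by simp
    have "(XA * transpose_mat XA + XB * transpose_mat XB) *\<^sub>v ?u
       = ((SA $$ (i,i))^2 + (SB $$ (j,j))^2) \<cdot>\<^sub>v ?u"
      unfolding split eA eB by (rule add_smult_distrib_vec[symmetric])
    moreover have "(SA $$ (i,i))^2 + (SB $$ (j,j))^2 > 0" by (rule add_pos_pos[OF sA sB])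
    ultimately show ?thesis by blast
  next
    case False
    have o: "\<forall>j<dim_col UB. col UB j \<bullet> ?u = 0"
    proof (intro allI impI)
      fix j assume j: "j < dim_col UB"
      have cj: "col UB j \<in> carrier_vec m" by (rule col_carr[OF UB])
      show "col UB j \<bullet> ?u = 0"
      proof (cases "col UB j \<in> set (cols UA)")
        case True
        then obtain i' where i': "i' < dim_col UA" and ji: "col UB j = col UA i'" using in_cols_iff by blast
        have "i' \<noteq> i"
        proof
          assume "i' = i"
          then have "?u \<in> set (cols UB)" using ji j in_cols_iff by metis
          then show False using False by contradiction
        qed
        then show ?thesis using col_self[OF UA UAA i' i] ji by simp
      next
        case F2: False
        have "?u \<bullet> col UB j = 0" using orth[rule_format, OF i j False F2] .
        then show ?thesis using comm_scalar_prod[OF u cj] by simp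
      qed
    qed
    have eB: "(XB * transpose_mat XB) *\<^sub>v ?u = 0\<^sub>v m"
    proof -
      have "?u \<in> carrier_vec (dim_row XB)" using u rows unfolding m_def by simp
      from svd_orth_zero[OF svdB this o] show ?thesis using rows unfolding m_def by simp
    qed
    have "(XA * transpose_mat XA + XB * transpose_mat XB) *\<^sub>v ?u = (SA $$ (i,i))^2 \<cdot>\<^sub>v ?u"
      unfolding split eA eB by (rule right_zero_vec) (simp add: u)
    then show ?thesis using sA by blast
  qed
qed

theorem mainTheorem4:
  fixes X1 X2 U1 S1 V1 U2 S2 V2 U S V :: "real mat"
  assumes rows: "dim_row X1 = dim_row X2"
    and svd1: "compact_svd X1 U1 S1 V1"
    and svd2: "compact_svd X2 U2 S2 V2"
    and svd: "compact_svd (hcat X1 X2) U S V"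
    and d1: "distinct_sv S1" and d2: "distinct_sv S2" and d: "distinct_sv S"
    and orth: "\<forall>i<dim_col U1. \<forall>j<dim_col U2.
       col U1 i \<notin> set (cols U2) \<longrightarrow> col U2 j \<notin> set (cols U1) \<longrightarrow>
       col U1 i \<bullet> col U2 j = 0"
  shows "(\<forall>i<dim_col U1. \<exists>k<dim_col U. col U1 i = col U k \<or> col U1 i = - col U k) \<and>
         (\<forall>j<dim_col U2. \<exists>k<dim_col U. col U2 j = col U k \<or> col U2 j = - col U k)"
proof -
  define m where "m = dim_row X1"
  have U1: "U1 \<in> carrier_mat m (dim_col U1)" and U11: "transpose_mat U1 * U1 = 1\<^sub>m (dim_col U1)"
    using svd1 unfolding compact_svd_def m_def Let_def by auto
  have U2: "U2 \<in> carrier_mat m (dim_col U2)" and U22: "transpose_mat U2 * U2 = 1\<^sub>m (dim_col U2)"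
    using svd2 rows unfolding compact_svd_def m_def Let_def by auto
  have dH: "dim_row (hcat X1 X2) = m" unfolding hcat_def m_def by simp
  have HH: "hcat X1 X2 * transpose_mat (hcat X1 X2) = X1 * transpose_mat X1 + X2 * transpose_mat X2"
    using hcat_MM[OF rows] .
  have MA: "X1 * transpose_mat X1 \<in> carrier_mat m m" using m_def by auto
  have MB: "X2 * transpose_mat X2 \<in> carrier_mat m m" using m_def rows by auto
  have orth': "\<forall>i<dim_col U2. \<forall>j<dim_col U1.
       col U2 i \<notin> set (cols U1) \<longrightarrow> col U1 j \<notin> set (cols U2) \<longrightarrow>
       col U2 i \<bullet> col U1 j = 0"
  proof (intro allI impI)
    fix i j assume i: "i < dim_col U2" and j: "j < dim_col U1"
      and a: "col U2 i \<notin> set (cols U1)" and b: "col U1 j \<notin> set (cols U2)"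
    have "col U1 j \<bullet> col U2 i = 0" using orth[rule_format, OF j i b a] .
    moreover have "col U1 j \<in> carrier_vec m" "col U2 i \<in> carrier_vec m" using col_carr[OF U1] col_carr[OF U2] by auto
    ultimately show "col U2 i \<bullet> col U1 j = 0" using comm_scalar_prod by metis
  qed
  show ?thesis
  proof (intro conjI allI impI)
    fix i assume i: "i < dim_col U1"
    obtain lam where lam: "lam > 0"
      and e: "(X1 * transpose_mat X1 + X2 * transpose_mat X2) *\<^sub>v col U1 i = lam \<cdot>\<^sub>v col U1 i"
      using two_col[OF rows svd1 svd2 orth i] by blast
    show "\<exists>k<dim_col U. col U1 i = col U k \<or> col U1 i = - col U k"
    proof -
      have c: "col U1 i \<in> carrier_vec (dim_row (hcat X1 X2))" unfolding dH by (rule col_carr[OF U1])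
      have cc: "col U1 i \<bullet> col U1 i = 1" using col_self[OF U1 U11 i i] by simp
      have ee: "(hcat X1 X2 * transpose_mat (hcat X1 X2)) *\<^sub>v col U1 i = lam \<cdot>\<^sub>v col U1 i"
        unfolding HH using e .
      show ?thesis by (rule svd_eigvec[OF svd d c cc ee lam])
    qed
  next
    fix j assume j: "j < dim_col U2"
    obtain lam where lam: "lam > 0"
      and e: "(X2 * transpose_mat X2 + X1 * transpose_mat X1) *\<^sub>v col U2 j = lam \<cdot>\<^sub>v col U2 j"
      using two_col[OF rows[symmetric] svd2 svd1 orth' j] by blast
    have comm: "X2 * transpose_mat X2 + X1 * transpose_mat X1 = X1 * transpose_mat X1 + X2 * transpose_mat X2"
      using MA MB by (rule comm_add_mat[symmetric])
    have e2: "(X1 * transpose_mat X1 + X2 * transpose_mat X2) *\<^sub>v col U2 j = lam \<cdot>\<^sub>v col U2 j"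
      using e unfolding comm .
    show "\<exists>k<dim_col U. col U2 j = col U k \<or> col U2 j = - col U k"
    proof -
      have c: "col U2 j \<in> carrier_vec (dim_row (hcat X1 X2))" unfolding dH by (rule col_carr[OF U2])
      have cc: "col U2 j \<bullet> col U2 j = 1" using col_self[OF U2 U22 j j] by simp
      have ee: "(hcat X1 X2 * transpose_mat (hcat X1 X2)) *\<^sub>v col U2 j = lam \<cdot>\<^sub>v col U2 j"
        unfolding HH using e2 .
      show ?thesis by (rule svd_eigvec[OF svd d c cc ee lam])
    qed
  qed
qed

end
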